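(* Let $f:\mathbb{R}^d\to\mathbb{R}$ be $C^3$, $1\le k\le d-1$, and let $\mathbf{x}^*$ be a critical point of $f$. Suppose there exist $\delta>0$, $L>\mu>0$, $M>0$ such that for all $\mathbf{x}$ with $\|\mathbf{x}-\mathbf{x}^*\|_2\le\delta$ the eigenvalues of $\nabla^2 f(\mathbf{x})$ satisfy $-L<\lambda_1\le\dots\le\lambda_k<-\mu<0<\mu<\lambda_{k+1}\le\dots\le\lambda_d<L$, and $\|\nabla^2 f(\mathbf{x})-\nabla^2 f(\mathbf{y})\|_2\le M\|\mathbf{x}-\mathbf{y}\|_2$ for all $\mathbf{x},\mathbf{y}$ in that ball. Consider the iteration $\mathbf{x}(n+1)=\mathbf{x}(n)-\alpha(n)\mathcal{P}_V\nabla f(\mathbf{x}(n);\omega(n))$ with $\mathcal{P}_V=I-2\sum_{i=1}^k\mathbf{v}_i(\mathbf{x}(n))\mathbf{v}_i(\mathbf{x}(n))^\top$. If $\alpha(n)<\frac{1}{2\mu}$ and $\mathbf{x}(n)\in U=\{\mathbf{x}:\|\mathbf{x}-\mathbf{x}^*\|_2\le\min(\mu/M,\delta)\}$, then $$\|\mathbf{x}(n+1)-\mathbf{x}^*\|_2^2\le(1-\alpha(n)\mu)\|\mathbf{x}(n)-\mathbf{x}^*\|_2^2+\alpha(n)\psi(n)+\alpha(n)^2\|\nabla f(\mathbf{x}(n);\omega(n))\|_2^2,$$ where $\psi(n)=-\langle 2\mathcal{P}_V(\nabla f(\mathbf{x}(n);\omega(n))-\nabla f(\mathbf{x}(n))),\mathbf{x}(n)-\mathbf{x}^*\rangle$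 is a martingale difference sequence with zero (conditional) expectation.
   Context: $\mathbf{v}_1(\mathbf{x}),\dots,\mathbf{v}_k(\mathbf{x})$ are orthonormal eigenvectors of $\nabla^2 f(\mathbf{x})$ corresponding to its $k$ smallest eigenvalues. $\nabla f(\mathbf{x};\omega)$ is a stochastic gradient with $\omega$ drawn from a probability space, satisfying $\mathbb{E}\,\nabla f(\mathbf{x};\omega)=\nabla f(\mathbf{x})$ for all $\mathbf{x}$; $\omega(n)$ is a fresh sample independent of $\mathbf{x}(0),\dots,\mathbf{x}(n)$. *)

theory Defs
  imports "HOL-Analysis.Analysis" "HOL-Probability.Probability"
begin

definition outer :: "real^'n \<Rightarrow> real^'n \<Rightarrow> real^'n^'n" where
  "outer u w = (\<chi> i j. u $ i * w $ j)"

text \<open>A full orthonormal eigenbasis w 0, ..., w (d-1) of A (d = CARD('n)), with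
  eigenvalues lam 0 \<le> ... \<le> lam (d-1) sorted increasingly (0-based indexing).\<close>
definition sorted_eigenbasis :: "real^'n^'n \<Rightarrow> (nat \<Rightarrow> real) \<Rightarrow> (nat \<Rightarrow> real^'n) \<Rightarrow> bool" where
  "sorted_eigenbasis A lam w \<longleftrightarrow>
     (\<forall>i<CARD('n). A *v w i = lam i *\<^sub>R w i) \<and>
     (\<forall>i<CARD('n). \<forall>j<CARD('n). w i \<bullet> w j = (if i = j then 1 else 0)) \<and>
     (\<forall>i j. i \<le> j \<longrightarrow> j < CARD('n) \<longrightarrow> lam i \<le> lam j)"

definition PV :: "(nat \<Rightarrow> real^'n \<Rightarrow> real^'n) \<Rightarrow> nat \<Rightarrow> real^'n \<Rightarrow> real^'n^'n" where
  "PV v k y = mat 1 - (2::real) *\<^sub>R (\<Sum>i<k. outer (v i y) (v i y))"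

end

theory Submission
  imports Defs
begin

lemma ortho_inner_sum:
  fixes w :: "nat \<Rightarrow> real^'n"
  assumes "finite I" "\<forall>i\<in>I. \<forall>j\<in>I. w i \<bullet> w j = (if i = j then 1 else 0)"
  shows "(\<Sum>i\<in>I. a i *\<^sub>R w i) \<bullet> (\<Sum>j\<in>I. b j *\<^sub>R w j) = (\<Sum>i\<in>I. a i * b i)"
proof -
  have "(\<Sum>i\<in>I. a i *\<^sub>R w i) \<bullet> (\<Sum>j\<in>I. b j *\<^sub>R w j) = (\<Sum>i\<in>I. \<Sum>j\<in>I. a i * b j * (w i \<bullet> w j))"
    unfolding inner_sum_left by (simp add: inner_sum_right sum_distrib_left algebra_simps)
  also have "\<dots> = (\<Sum>i\<in>I. \<Sum>j\<in>I. if i = j then a i * b i else 0)"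
    using assms(2) by (intro sum.cong refl) auto
  also have "\<dots> = (\<Sum>i\<in>I. a i * b i)" using assms(1) by simp
  finally show ?thesis .
qed

lemma ortho_inner_one:
  fixes w :: "nat \<Rightarrow> real^'n"
  assumes "finite I" "\<forall>i\<in>I. \<forall>j\<in>I. w i \<bullet> w j = (if i = j then 1 else 0)" "j \<in> I"
  shows "w j \<bullet> (\<Sum>i\<in>I. a i *\<^sub>R w i) = a j"
proof -
  have "w j \<bullet> (\<Sum>i\<in>I. a i *\<^sub>R w i) = (\<Sum>i\<in>I. if i = j then a j else 0)"
    unfolding inner_sum_right using assms(2,3) by (intro sum.cong refl) auto
  also have "\<dots> = a j" using assms by simp
  finally show ?thesis .
qed

lemma expand:
  fixes w :: "nat \<Rightarrow> real^'n" and A :: "real^'n^'n"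
  assumes "finite I" "\<forall>i\<in>I. \<forall>j\<in>I. w i \<bullet> w j = (if i = j then 1 else 0)"
    "\<forall>i\<in>I. A *v w i = lam i *\<^sub>R w i" "u \<in> span (w ` I)"
  shows "u = (\<Sum>i\<in>I. (w i \<bullet> u) *\<^sub>R w i) \<and> A *v u = (\<Sum>i\<in>I. (lam i * (w i \<bullet> u)) *\<^sub>R w i)"
  using assms(4)
proof (induction rule: span_induct)
  case base
  show ?case unfolding subspace_def
    by (auto simp: inner_add_right scaleR_add_left sum.distrib matrix_vector_right_distrib
        scaleR_sum_right matrix_vector_mult_scaleR algebra_simps)
       (metis (no_types, lifting) scaleR_scaleR scaleR_sum_right sum.cong)
next
  case (step x)
  then obtain j where j: "j \<in> I" "x = w j" by auto
  have 1: "(\<Sum>i\<in>I. (w i \<bullet> x) *\<^sub>R w i) = (\<Sum>i\<in>I. if i = j then w j else 0)"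
    using assms(2) j by (intro sum.cong refl) auto
  have 2: "(\<Sum>i\<in>I. (lam i * (w i \<bullet> x)) *\<^sub>R w i) = (\<Sum>i\<in>I. if i = j then lam j *\<^sub>R w j else 0)"
    using assms(2) j by (intro sum.cong refl) auto
  show ?case using 1 2 j assms(1,3) by simp
qed

lemma quad:
  fixes w :: "nat \<Rightarrow> real^'n" and A :: "real^'n^'n"
  assumes "finite I" "\<forall>i\<in>I. \<forall>j\<in>I. w i \<bullet> w j = (if i = j then 1 else 0)"
    "\<forall>i\<in>I. A *v w i = lam i *\<^sub>R w i" "u \<in> span (w ` I)"
  shows "u \<bullet> (A *v u) = (\<Sum>i\<in>I. lam i * (w i \<bullet> u)^2) \<and> u \<bullet> u = (\<Sum>i\<in>I. (w i \<bullet> u)^2)"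
proof -
  note e = expand[OF assms]
  have "u \<bullet> (A *v u) = (\<Sum>i\<in>I. (w i \<bullet> u) *\<^sub>R w i) \<bullet> (\<Sum>i\<in>I. (lam i * (w i \<bullet> u)) *\<^sub>R w i)"
    using e by metis
  also have "\<dots> = (\<Sum>i\<in>I. lam i * (w i \<bullet> u)^2)"
    by (subst ortho_inner_sum[OF assms(1,2)]) (simp add: power2_eq_square algebra_simps)
  finally have 1: "u \<bullet> (A *v u) = (\<Sum>i\<in>I. lam i * (w i \<bullet> u)^2)" .
  have "u \<bullet> u = (\<Sum>i\<in>I. (w i \<bullet> u) *\<^sub>R w i) \<bullet> (\<Sum>i\<in>I. (w i \<bullet> u) *\<^sub>R w i)"
    using e by metis
  also have "\<dots> = (\<Sum>i\<in>I. (w i \<bullet> u)^2)"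
    by (subst ortho_inner_sum[OF assms(1,2)]) (simp add: power2_eq_square)
  finally show ?thesis using 1 by simp
qed

lemma ortho_indep:
  fixes w :: "nat \<Rightarrow> real^'n"
  assumes "\<forall>i\<in>I. \<forall>j\<in>I. w i \<bullet> w j = (if i = j then 1 else 0)"
  shows "independent (w ` I)" "inj_on w I"
proof -
  show "inj_on w I"
  proof (rule inj_onI)
    fix i j assume "i \<in> I" "j \<in> I" "w i = w j"
    then have "w i \<bullet> w j = 1" using assms by auto
    then show "i = j" using assms \<open>i \<in> I\<close> \<open>j \<in> I\<close> by (auto split: if_splits)
  qed
  show "independent (w ` I)"
  proof (rule pairwise_orthogonal_independent)
    show "pairwise orthogonal (w ` I)" using assms
      by (auto simp: pairwise_def orthogonal_def)
    show "0 \<notin> w ` I"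
    proof
      assume "0 \<in> w ` I"
      then obtain i where "i \<in> I" "w i = 0" by auto
      then show False using assms by force
    qed
  qed
qed

lemma no_overlap:
  fixes a b :: "nat \<Rightarrow> real^'n" and A :: "real^'n^'n"
  assumes I: "finite I" "\<forall>i\<in>I. \<forall>j\<in>I. a i \<bullet> a j = (if i = j then 1 else 0)"
    "\<forall>i\<in>I. A *v a i = la i *\<^sub>R a i" "\<forall>i\<in>I. la i < c"
  and J: "finite J" "\<forall>i\<in>J. \<forall>j\<in>J. b i \<bullet> b j = (if i = j then 1 else 0)"
    "\<forall>i\<in>J. A *v b i = lb i *\<^sub>R b i" "\<forall>i\<in>J. c \<le> lb i"
  and card: "CARD('n) < card I + card J"
  shows False
proof -
  let ?S = "span (a ` I)" and ?T = "span (b ` J)"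
  have dS: "dim ?S = card I"
    using ortho_indep[OF I(2)] by (simp add: dim_span_eq_card_independent dim_eq_card_independent card_image)
  have dT: "dim ?T = card J"
    using ortho_indep[OF J(2)] by (simp add: dim_span_eq_card_independent dim_eq_card_independent card_image)
  have "dim {x + y |x y. x \<in> ?S \<and> y \<in> ?T} + dim (?S \<inter> ?T) = dim ?S + dim ?T"
    by (rule dim_sums_Int) (simp_all add: subspace_span)
  moreover have "dim {x + y |x y. x \<in> ?S \<and> y \<in> ?T} \<le> CARD('n)"
    by (rule dim_subset_UNIV_cart)
  ultimately have "dim (?S \<inter> ?T) \<noteq> 0" using dS dT card by linarith
  then have "\<not> (?S \<inter> ?T \<subseteq> {0})" by (simp only: dim_eq_0[symmetric]) simp
  then obtain u where u: "u \<in> ?S" "u \<in> ?T" "u \<noteq> 0" by blast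
  note qa = quad[OF I(1-3) u(1)] and qb = quad[OF J(1-3) u(2)]
  have "\<exists>i\<in>I. a i \<bullet> u \<noteq> 0"
  proof (rule ccontr)
    assume "\<not> ?thesis"
    then have "u \<bullet> u = 0" using qa by simp
    then show False using u(3) by simp
  qed
  then obtain i0 where i0: "i0 \<in> I" "a i0 \<bullet> u \<noteq> 0" by blast
  have "0 < (\<Sum>i\<in>I. (c - la i) * (a i \<bullet> u)^2)"
    by (rule sum_pos2[OF I(1) i0(1)]) (use i0 I(4) in auto)
  moreover have "(\<Sum>i\<in>I. (c - la i) * (a i \<bullet> u)^2) = c * (\<Sum>i\<in>I. (a i \<bullet> u)^2) - (\<Sum>i\<in>I. la i * (a i \<bullet> u)^2)"
    by (simp add: left_diff_distrib sum_subtractf sum_distrib_left)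
  ultimately have "u \<bullet> (A *v u) < c * (u \<bullet> u)"
    unfolding conjunct1[OF qa] conjunct2[OF qa] by linarith
  moreover have "c * (u \<bullet> u) \<le> u \<bullet> (A *v u)"
  proof -
    have "0 \<le> (\<Sum>i\<in>J. (lb i - c) * (b i \<bullet> u)^2)"
      by (rule sum_nonneg) (use J(4) in auto)
    moreover have "(\<Sum>i\<in>J. (lb i - c) * (b i \<bullet> u)^2) = (\<Sum>i\<in>J. lb i * (b i \<bullet> u)^2) - c * (\<Sum>i\<in>J. (b i \<bullet> u)^2)"
      by (simp add: left_diff_distrib sum_subtractf sum_distrib_left)
    ultimately show ?thesis unfolding conjunct1[OF qb] conjunct2[OF qb] by linarith
  qed
  ultimately show False by simp
qed

lemma neg_mv: "(- A) *v x = - (A *v (x::real^'n))" for A :: "real^'n^'m"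
  by (simp add: matrix_vector_mult_def vec_eq_iff sum_negf)

lemma sign_match:
  fixes A :: "real^'n^'n"
  assumes sw: "sorted_eigenbasis A lam w" and sw': "sorted_eigenbasis A lam' w'"
    and k: "1 \<le> k" "k < CARD('n)"
    and neg: "\<forall>i<k. lam i < - \<mu>" and pos: "\<forall>i. k \<le> i \<and> i < CARD('n) \<longrightarrow> \<mu> < lam i"
  shows "(\<forall>i<k. lam' i < - \<mu>) \<and> (\<forall>i. k \<le> i \<and> i < CARD('n) \<longrightarrow> \<mu> < lam' i)"
proof -
  let ?d = "CARD('n)"
  from sw have w1: "\<forall>i<?d. A *v w i = lam i *\<^sub>R w i"
    and w2: "\<forall>i<?d. \<forall>j<?d. w i \<bullet> w j = (if i = j then 1 else 0)"
    unfolding sorted_eigenbasis_def by auto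
  from sw' have v1: "\<forall>i<?d. A *v w' i = lam' i *\<^sub>R w' i"
    and v2: "\<forall>i<?d. \<forall>j<?d. w' i \<bullet> w' j = (if i = j then 1 else 0)"
    and v3: "\<forall>i j. i \<le> j \<longrightarrow> j < ?d \<longrightarrow> lam' i \<le> lam' j"
    unfolding sorted_eigenbasis_def by auto
  have a: "lam' (k - 1) < - \<mu>"
  proof (rule ccontr)
    assume h: "\<not> ?thesis"
    show False
    proof (rule no_overlap[of "{..<k}" w A lam "- \<mu>" "{k - 1..<?d}" w' lam'])
      show "\<forall>i\<in>{..<k}. \<forall>j\<in>{..<k}. w i \<bullet> w j = (if i = j then 1 else 0)" using w2 k by auto
      show "\<forall>i\<in>{..<k}. A *v w i = lam i *\<^sub>R w i" using w1 k by auto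
      show "\<forall>i\<in>{..<k}. lam i < - \<mu>" using neg by auto
      show "\<forall>i\<in>{k - 1..<?d}. \<forall>j\<in>{k - 1..<?d}. w' i \<bullet> w' j = (if i = j then 1 else 0)" using v2 by auto
      show "\<forall>i\<in>{k - 1..<?d}. A *v w' i = lam' i *\<^sub>R w' i" using v1 by auto
      show "\<forall>i\<in>{k - 1..<?d}. - \<mu> \<le> lam' i" using h v3 by (meson atLeastLessThan_iff not_less order_trans)
      show "?d < card {..<k} + card {k - 1..<?d}" using k by simp
    qed auto
  qed
  have b: "\<mu> < lam' k"
  proof (rule ccontr)
    assume h: "\<not> ?thesis"
    show False
    proof (rule no_overlap[of "{k..<?d}" w "- A" "\<lambda>i. - lam i" "- \<mu>" "{..k}" w' "\<lambda>i. - lam' i"])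
      show "\<forall>i\<in>{k..<?d}. \<forall>j\<in>{k..<?d}. w i \<bullet> w j = (if i = j then 1 else 0)" using w2 k by auto
      show "\<forall>i\<in>{k..<?d}. (- A) *v w i = (- lam i) *\<^sub>R w i" using w1 k by (auto simp: neg_mv)
      show "\<forall>i\<in>{k..<?d}. - lam i < - \<mu>" using pos by auto
      show "\<forall>i\<in>{..k}. \<forall>j\<in>{..k}. w' i \<bullet> w' j = (if i = j then 1 else 0)" using v2 k by auto
      show "\<forall>i\<in>{..k}. (- A) *v w' i = (- lam' i) *\<^sub>R w' i" using v1 k by (auto simp: neg_mv)
      show "\<forall>i\<in>{..k}. - \<mu> \<le> - lam' i" using h v3 k by (meson atMost_iff neg_le_iff_le not_less order_trans)
      show "?d < card {k..<?d} + card {..k}" using k by simp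
    qed auto
  qed
  show ?thesis
  proof safe
    fix i assume "i < k"
    then have "lam' i \<le> lam' (k - 1)" using v3 k by auto
    then show "lam' i < - \<mu>" using a by simp
  next
    fix i assume "k \<le> i" "i < ?d"
    then have "lam' k \<le> lam' i" using v3 by auto
    then show "\<mu> < lam' i" using b by simp
  qed
qed

lemma outer_mv: "outer u w *v z = (w \<bullet> z) *\<^sub>R u" for u w z :: "real^'n"
  by (simp add: outer_def matrix_vector_mult_def vec_eq_iff inner_vec_def sum_distrib_left mult.assoc mult.commute mult.left_commute)

lemma sum_mv: "(\<Sum>i\<in>I. B i) *v z = (\<Sum>i\<in>I. B i *v z)" for B :: "nat \<Rightarrow> real^'n^'n"
  by (induct I rule: infinite_finite_induct) (simp_all add: matrix_vector_mult_add_rdistrib)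

lemma PV_apply: "PV v k y *v z = z - 2 *\<^sub>R (\<Sum>i<k. (v i y \<bullet> z) *\<^sub>R v i y)"
  by (simp add: PV_def matrix_vector_mult_diff_rdistrib sum_mv outer_mv scaleR_matrix_vector_assoc[symmetric])

lemma refl_norm:
  fixes u :: "nat \<Rightarrow> real^'n"
  assumes "finite I" "\<forall>i\<in>I. \<forall>j\<in>I. u i \<bullet> u j = (if i = j then 1 else 0)"
  shows "norm (z - 2 *\<^sub>R (\<Sum>i\<in>I. (u i \<bullet> z) *\<^sub>R u i)) = norm z"
proof -
  let ?S = "\<Sum>i\<in>I. (u i \<bullet> z) *\<^sub>R u i"
  have 1: "z \<bullet> ?S = (\<Sum>i\<in>I. (u i \<bullet> z)^2)"
    by (simp add: inner_sum_right power2_eq_square inner_commute)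
  have 2: "?S \<bullet> ?S = (\<Sum>i\<in>I. (u i \<bullet> z)^2)"
    by (simp add: ortho_inner_sum[OF assms] power2_eq_square)
  have "(z - 2 *\<^sub>R ?S) \<bullet> (z - 2 *\<^sub>R ?S) = z \<bullet> z - 4 * (z \<bullet> ?S) + 4 * (?S \<bullet> ?S)"
    by (simp add: inner_diff_left inner_diff_right inner_commute)
  also have "\<dots> = z \<bullet> z" using 1 2 by simp
  finally show ?thesis by (simp add: norm_eq_sqrt_inner)
qed

lemma P_quad:
  fixes A :: "real^'n^'n"
  assumes sw': "sorted_eigenbasis A lam' w'" and k: "k < CARD('n)"
    and neg: "\<forall>i<k. lam' i < - \<mu>" and pos: "\<forall>i. k \<le> i \<and> i < CARD('n) \<longrightarrow> \<mu> < lam' i"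
  shows "\<mu> * (e \<bullet> e) \<le> (A *v e - 2 *\<^sub>R (\<Sum>i<k. (w' i \<bullet> (A *v e)) *\<^sub>R w' i)) \<bullet> e"
proof -
  let ?d = "CARD('n)"
  from sw' have v1: "\<forall>i\<in>{..<?d}. A *v w' i = lam' i *\<^sub>R w' i"
    and v2: "\<forall>i\<in>{..<?d}. \<forall>j\<in>{..<?d}. w' i \<bullet> w' j = (if i = j then 1 else 0)"
    unfolding sorted_eigenbasis_def by auto
  have "UNIV \<subseteq> span (w' ` {..<?d})"
  proof (rule card_ge_dim_independent)
    show "independent (w' ` {..<?d})" using ortho_indep[OF v2] by simp
    show "dim (UNIV :: (real^'n) set) \<le> card (w' ` {..<?d})"
      using ortho_indep[OF v2] by (simp add: card_image)
  qed auto
  then have espan: "e \<in> span (w' ` {..<?d})" by auto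
  let ?c = "\<lambda>i. w' i \<bullet> e"
  note ex = expand[OF _ v2 v1 espan, simplified]
  note q = quad[OF _ v2 v1 espan, simplified]
  have wA: "w' j \<bullet> (A *v e) = lam' j * ?c j" if "j < k" for j
  proof -
    have "w' j \<bullet> (A *v e) = w' j \<bullet> (\<Sum>i<?d. (lam' i * ?c i) *\<^sub>R w' i)"
      using ex by metis
    also have "\<dots> = lam' j * ?c j"
      by (rule ortho_inner_one[OF _ v2]) (use that k in auto)
    finally show ?thesis .
  qed
  have "(\<Sum>i<k. (w' i \<bullet> (A *v e)) *\<^sub>R w' i) \<bullet> e = (\<Sum>i<k. lam' i * (?c i)^2)"
    by (simp add: inner_sum_left inner_sum_right wA power2_eq_square mult.assoc inner_commute)
  then have val: "(A *v e - 2 *\<^sub>R (\<Sum>i<k. (w' i \<bullet> (A *v e)) *\<^sub>R w' i)) \<bullet> e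
      = (\<Sum>i<?d. lam' i * (?c i)^2) - 2 * (\<Sum>i<k. lam' i * (?c i)^2)"
    using q by (simp add: inner_diff_left inner_diff_right inner_commute)
  have split: "(\<Sum>i<?d. f i) = (\<Sum>i<k. f i) + (\<Sum>i\<in>{k..<?d}. f i)" for f :: "nat \<Rightarrow> real"
    using k by (metis lessThan_atLeast0 less_imp_le_nat sum.atLeastLessThan_concat zero_le)
  have s1: "\<mu> * (\<Sum>i<k. (?c i)^2) \<le> (\<Sum>i<k. - lam' i * (?c i)^2)"
    unfolding sum_distrib_left
  proof (rule sum_mono)
    fix i assume "i \<in> {..<k}"
    then have "\<mu> \<le> - lam' i" using neg by force
    then show "\<mu> * (?c i)^2 \<le> - lam' i * (?c i)^2" by (rule mult_right_mono) simp
  qed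
  have s2: "\<mu> * (\<Sum>i\<in>{k..<?d}. (?c i)^2) \<le> (\<Sum>i\<in>{k..<?d}. lam' i * (?c i)^2)"
    unfolding sum_distrib_left
    by (rule sum_mono) (use pos in \<open>auto intro!: mult_right_mono\<close>)
  have "\<mu> * (e \<bullet> e) = \<mu> * (\<Sum>i<k. (?c i)^2) + \<mu> * (\<Sum>i\<in>{k..<?d}. (?c i)^2)"
    using q split by (simp add: distrib_left)
  also have "\<dots> \<le> (\<Sum>i<k. - lam' i * (?c i)^2) + (\<Sum>i\<in>{k..<?d}. lam' i * (?c i)^2)"
    using s1 s2 by linarith
  also have "\<dots> = (\<Sum>i<?d. lam' i * (?c i)^2) - 2 * (\<Sum>i<k. lam' i * (?c i)^2)"
    by (simp add: split sum_negf)
  finally show ?thesis using val by simp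
qed

lemma remainder:
  fixes grad :: "real^'d \<Rightarrow> real^'d" and H :: "real^'d \<Rightarrow> real^'d^'d"
  assumes hess: "\<And>y. (grad has_derivative (\<lambda>h. H y *v h)) (at y)"
    and lip: "\<forall>y\<in>cball xs \<delta>. \<forall>z\<in>cball xs \<delta>. onorm (\<lambda>h. (H y - H z) *v h) \<le> M * norm (y - z)"
    and yd: "norm (y - xs) \<le> \<delta>"
  shows "norm (grad y - grad xs - H y *v (y - xs)) \<le> M / 2 * (norm (y - xs))^2"
proof -
  define e where "e = y - xs"
  define \<phi> where "\<phi> = (\<lambda>t::real. grad (xs + t *\<^sub>R e) - t *\<^sub>R (H y *v e))"
  define K where "K = M * (norm e)^2"
  define \<psi> where "\<psi> = (\<lambda>t::real. - (K / 2) * (1 - t)^2)"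
  have dphi: "(\<phi> has_vector_derivative (H (xs + t *\<^sub>R e) *v e - H y *v e)) (at t)" for t
  proof -
    have 1: "((\<lambda>t. xs + t *\<^sub>R e) has_derivative (\<lambda>h. h *\<^sub>R e)) (at t)"
      by (auto intro!: derivative_eq_intros)
    have 2: "((\<lambda>t. grad (xs + t *\<^sub>R e)) has_derivative (\<lambda>h. H (xs + t *\<^sub>R e) *v (h *\<^sub>R e))) (at t)"
      by (rule has_derivative_compose[OF 1 hess])
    have 3: "((\<lambda>t. grad (xs + t *\<^sub>R e)) has_vector_derivative (H (xs + t *\<^sub>R e) *v e)) (at t)"
      unfolding has_vector_derivative_def
      using 2 by (simp add: matrix_vector_mult_scaleR)
    have 4: "((\<lambda>t. t *\<^sub>R (H y *v e)) has_vector_derivative (H y *v e)) (at t)"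
      unfolding has_vector_derivative_def
      by (rule bounded_linear_imp_has_derivative) (rule bounded_linear_scaleR_left)
    show ?thesis unfolding \<phi>_def by (rule has_vector_derivative_diff[OF 3 4])
  qed
  have dpsi: "(\<psi> has_vector_derivative (K * (1 - t))) (at t)" for t
  proof -
    have "(\<psi> has_real_derivative (K * (1 - t))) (at t)"
      unfolding \<psi>_def by (auto intro!: derivative_eq_intros simp: field_simps)
    then show ?thesis by (simp add: has_real_derivative_iff_has_vector_derivative)
  qed
  have bnd: "norm (H (xs + t *\<^sub>R e) *v e - H y *v e) \<le> K * (1 - t)" if t: "0 < t" "t < 1" for t
  proof -
    let ?p = "xs + t *\<^sub>R e"
    have pin: "?p \<in> cball xs \<delta>"
    proof -
      have "dist xs ?p = t * norm e" using t by (simp add: dist_norm)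
      also have "\<dots> \<le> norm e" using t by (simp add: mult_left_le_one_le)
      finally show ?thesis using yd by (simp add: e_def)
    qed
    have yin: "y \<in> cball xs \<delta>" using yd by (simp add: dist_norm norm_minus_commute)
    have "H ?p *v e - H y *v e = (H ?p - H y) *v e" by (simp add: matrix_vector_mult_diff_rdistrib)
    also have "norm \<dots> \<le> onorm (\<lambda>h. (H ?p - H y) *v h) * norm e"
      by (rule onorm) simp
    also have "\<dots> \<le> M * norm (?p - y) * norm e"
      using lip pin yin by (intro mult_right_mono) auto
    also have "?p - y = (t - 1) *\<^sub>R e" by (simp add: e_def algebra_simps)
    also have "M * norm ((t - 1) *\<^sub>R e) * norm e = K * (1 - t)"
      using t by (simp add: K_def power2_eq_square)
    finally show ?thesis .
  qed
  have cphi: "continuous_on {0..1} \<phi>"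
    using dphi by (meson continuous_at_imp_continuous_on has_vector_derivative_continuous)
  have cpsi: "continuous_on {0..1} \<psi>"
    using dpsi by (meson continuous_at_imp_continuous_on has_vector_derivative_continuous)
  have "norm (\<phi> 1 - \<phi> 0) \<le> \<psi> 1 - \<psi> 0"
    by (rule differentiable_bound_general[OF zero_less_one cphi cpsi dphi dpsi bnd])
  moreover have "\<phi> 1 - \<phi> 0 = grad y - grad xs - H y *v (y - xs)"
    by (simp add: \<phi>_def e_def)
  moreover have "\<psi> 1 - \<psi> 0 = M / 2 * (norm (y - xs))^2"
    by (simp add: \<psi>_def K_def e_def)
  ultimately show ?thesis by simp
qed

lemma sq_expand: "(e - a *\<^sub>R p) \<bullet> (e - a *\<^sub>R p) = e \<bullet> e - 2 * a * (p \<bullet> e) + a\<^sup>2 * (p \<bullet> p)"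
  for e p :: "real^'n" and a :: real
proof -
  have "(e - a *\<^sub>R p) \<bullet> (e - a *\<^sub>R p) = e \<bullet> e - a * (e \<bullet> p) - a * (p \<bullet> e) + a * a * (p \<bullet> p)"
    unfolding inner_diff_left inner_diff_right inner_scaleR_left inner_scaleR_right by (simp add: algebra_simps)
  then show ?thesis by (simp add: inner_commute[of e p] power2_eq_square)
qed

lemma final_arith:
  fixes E A B a mu G2 :: real
  assumes "a * (mu * E) \<le> a * (2 * B)"
  shows "E - 2 * a * (A + B) + a\<^sup>2 * G2 \<le> (1 - a * mu) * E + a * - (2 * A) + a\<^sup>2 * G2"
  using assms by (simp add: algebra_simps)

theorem proposition4p3:
  fixes f :: "real^'d \<Rightarrow> real"
    and grad :: "real^'d \<Rightarrow> real^'d"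
    and H :: "real^'d \<Rightarrow> real^'d^'d"
    and H3 :: "real^'d \<Rightarrow> ((real^'d) \<Rightarrow>\<^sub>L (real^'d^'d))"
    and v :: "nat \<Rightarrow> real^'d \<Rightarrow> real^'d"
    and M\<^sub>\<omega> :: "'w measure"
    and G :: "real^'d \<Rightarrow> 'w \<Rightarrow> real^'d"
    and x :: "nat \<Rightarrow> real^'d" and \<omega> :: "nat \<Rightarrow> 'w" and \<alpha> :: "nat \<Rightarrow> real"
    and xs :: "real^'d" and k n :: nat and \<delta> L \<mu> M :: real
  assumes grad: "\<And>y. (f has_derivative (\<lambda>h. grad y \<bullet> h)) (at y)"
    and hess: "\<And>y. (grad has_derivative (\<lambda>h. H y *v h)) (at y)"
    and third: "\<And>y. (H has_derivative blinfun_apply (H3 y)) (at y)"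
    and C3: "continuous_on UNIV H3"
    and k: "1 \<le> k" "k \<le> CARD('d) - 1"
    and crit: "grad xs = 0"
    and params: "\<delta> > 0" "L > \<mu>" "\<mu> > 0" "M > 0"
    and spec: "\<forall>y\<in>cball xs \<delta>. \<exists>lam w. sorted_eigenbasis (H y) lam w \<and>
                 (\<forall>i<k. - L < lam i \<and> lam i < - \<mu>) \<and>
                 (\<forall>i. k \<le> i \<and> i < CARD('d) \<longrightarrow> \<mu> < lam i \<and> lam i < L)"
    and lip: "\<forall>y\<in>cball xs \<delta>. \<forall>z\<in>cball xs \<delta>.
                 onorm (\<lambda>h. (H y - H z) *v h) \<le> M * norm (y - z)"
    and evecs: "\<forall>y. \<exists>lam w. sorted_eigenbasis (H y) lam w \<and> (\<forall>i<k. w i = v i y)"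
    and prob: "prob_space M\<^sub>\<omega>"
    and Gint: "\<And>y. integrable M\<^sub>\<omega> (G y)"
    and Gmean: "\<And>y. (\<integral>w. G y w \<partial>M\<^sub>\<omega>) = grad y"
    and omega: "\<omega> n \<in> space M\<^sub>\<omega>"
    and iter: "\<And>m. x (Suc m) = x m - \<alpha> m *\<^sub>R (PV v k (x m) *v G (x m) (\<omega> m))"
    and step: "0 \<le> \<alpha> n" "\<alpha> n < 1 / (2 * \<mu>)"
    and inU: "x n \<in> cball xs (min (\<mu> / M) \<delta>)"
  shows "(norm (x (Suc n) - xs))\<^sup>2 \<le> (1 - \<alpha> n * \<mu>) * (norm (x n - xs))\<^sup>2
            + \<alpha> n * (- ((2::real) *\<^sub>R (PV v k (x n) *v (G (x n) (\<omega> n) - grad (x n)))) \<bullet> (x n - xs))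
            + (\<alpha> n)\<^sup>2 * (norm (G (x n) (\<omega> n)))\<^sup>2
         \<and> (\<integral>w. - ((2::real) *\<^sub>R (PV v k (x n) *v (G (x n) w - grad (x n)))) \<bullet> (x n - xs) \<partial>M\<^sub>\<omega>) = 0"
proof -
  let ?y = "x n" and ?d = "CARD('d)"
  define e where "e = x n - xs"
  define g where "g = G (x n) (\<omega> n)"
  define P where "P = PV v k (x n)"
  have ne: "norm e \<le> \<mu> / M" "norm e \<le> \<delta>"
    using inU by (auto simp: e_def dist_norm norm_minus_commute)
  have yin: "?y \<in> cball xs \<delta>" using ne by (simp add: e_def dist_norm norm_minus_commute)
  obtain lam w where sw: "sorted_eigenbasis (H ?y) lam w"
    and neg: "\<forall>i<k. - L < lam i \<and> lam i < - \<mu>"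
    and pos: "\<forall>i. k \<le> i \<and> i < ?d \<longrightarrow> \<mu> < lam i \<and> lam i < L"
    using spec yin by blast
  obtain lam' w' where sw': "sorted_eigenbasis (H ?y) lam' w'" and wv: "\<forall>i<k. w' i = v i ?y"
    using evecs by blast
  have kd: "k < ?d" using k by linarith
  have sm: "(\<forall>i<k. lam' i < - \<mu>) \<and> (\<forall>i. k \<le> i \<and> i < ?d \<longrightarrow> \<mu> < lam' i)"
    by (rule sign_match[OF sw sw' k(1) kd]) (use neg pos in auto)
  have Pz: "P *v z = z - 2 *\<^sub>R (\<Sum>i<k. (w' i \<bullet> z) *\<^sub>R w' i)" for z
    unfolding P_def PV_apply using wv by simp
  have orth: "\<forall>i\<in>{..<k}. \<forall>j\<in>{..<k}. w' i \<bullet> w' j = (if i = j then 1 else 0)"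
    using sw' kd unfolding sorted_eigenbasis_def by auto
  have Pn: "norm (P *v z) = norm z" for z
    unfolding Pz by (rule refl_norm[OF _ orth]) simp
  define r where "r = grad ?y - H ?y *v e"
  have rb: "norm r \<le> M / 2 * (norm e)^2"
    using remainder[OF hess lip, of ?y] ne crit by (simp add: r_def e_def)
  have Me: "M * norm e \<le> \<mu>" using ne params by (simp add: field_simps)
  have q1: "\<mu> * (e \<bullet> e) \<le> (P *v (H ?y *v e)) \<bullet> e"
    unfolding Pz using P_quad[OF sw' kd, of \<mu> e] sm by simp
  have q2: "- (\<mu> / 2 * (e \<bullet> e)) \<le> (P *v r) \<bullet> e"
  proof -
    have "- ((P *v r) \<bullet> e) \<le> norm (P *v r) * norm e"
      using norm_cauchy_schwarz[of "- (P *v r)" e] by simp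
    also have "\<dots> = norm r * norm e" by (simp add: Pn)
    also have "\<dots> \<le> M / 2 * (norm e)^2 * norm e" by (rule mult_right_mono[OF rb]) simp
    also have "\<dots> = (M * norm e) / 2 * (norm e)^2" by (simp add: algebra_simps)
    also have "\<dots> \<le> \<mu> / 2 * (norm e)^2" using Me by (simp add: mult_right_mono divide_right_mono)
    also have "\<dots> = \<mu> / 2 * (e \<bullet> e)" by (simp add: power2_norm_eq_inner)
    finally show ?thesis by linarith
  qed
  have gy: "grad ?y = H ?y *v e + r" by (simp add: r_def)
  have key: "\<mu> * (e \<bullet> e) \<le> 2 * ((P *v grad ?y) \<bullet> e)"
    using q1 q2 unfolding gy by (simp add: matrix_vector_right_distrib inner_add_left)
  have xs1: "x (Suc n) - xs = e - \<alpha> n *\<^sub>R (P *v g)"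
    by (simp add: iter e_def g_def P_def)
  have sq: "(norm (x (Suc n) - xs))\<^sup>2 = e \<bullet> e - 2 * \<alpha> n * ((P *v g) \<bullet> e) + (\<alpha> n)\<^sup>2 * (norm g)\<^sup>2"
  proof -
    have "(norm (x (Suc n) - xs))\<^sup>2 = (e - \<alpha> n *\<^sub>R (P *v g)) \<bullet> (e - \<alpha> n *\<^sub>R (P *v g))"
      by (simp add: xs1 power2_norm_eq_inner)
    also have "\<dots> = e \<bullet> e - 2 * \<alpha> n * ((P *v g) \<bullet> e) + (\<alpha> n)\<^sup>2 * ((P *v g) \<bullet> (P *v g))"
      by (rule sq_expand)
    also have "(P *v g) \<bullet> (P *v g) = (norm g)\<^sup>2" using Pn[of g] by (simp add: power2_norm_eq_inner[symmetric])
    finally show ?thesis .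
  qed
  have split: "(P *v g) \<bullet> e = (P *v (g - grad ?y)) \<bullet> e + (P *v grad ?y) \<bullet> e"
    by (simp add: matrix_vector_mult_diff_distrib inner_diff_left)
  have am: "\<alpha> n * (\<mu> * (e \<bullet> e)) \<le> \<alpha> n * (2 * ((P *v grad ?y) \<bullet> e))"
    using key step(1) by (rule mult_left_mono)
  have part1: "(norm (x (Suc n) - xs))\<^sup>2 \<le> (1 - \<alpha> n * \<mu>) * (norm (x n - xs))\<^sup>2
            + \<alpha> n * (- ((2::real) *\<^sub>R (PV v k (x n) *v (G (x n) (\<omega> n) - grad (x n)))) \<bullet> (x n - xs))
            + (\<alpha> n)\<^sup>2 * (norm (G (x n) (\<omega> n)))\<^sup>2"
    unfolding sq split e_def[symmetric] g_def[symmetric] P_def[symmetric] power2_norm_eq_inner[of e]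
      inner_minus_left inner_scaleR_left
    using am by (rule final_arith)
  interpret ps: prob_space M\<^sub>\<omega> by (rule prob)
  define T where "T = (\<lambda>z. - ((2::real) *\<^sub>R (P *v z)) \<bullet> e)"
  have blT: "bounded_linear T"
    unfolding T_def
    using bounded_linear_compose[OF bounded_linear_inner_left[of e] bounded_linear_minus[OF bounded_linear_compose[OF bounded_linear_scaleR_right matrix_vector_mul_bounded_linear[of P]]]]
    by (simp add: o_def)
  have int1: "integrable M\<^sub>\<omega> (\<lambda>w. G ?y w - grad ?y)"
    by (intro Bochner_Integration.integrable_diff Gint ps.integrable_const)
  have "(\<integral>w. G ?y w - grad ?y \<partial>M\<^sub>\<omega>) = 0"
    using Gint[of ?y] Gmean[of ?y] by (simp add: ps.integrable_const ps.prob_space)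
  then have "(\<integral>w. T (G ?y w - grad ?y) \<partial>M\<^sub>\<omega>) = 0"
    using integral_bounded_linear[OF blT int1] by (simp add: T_def)
  then have part2: "(\<integral>w. - ((2::real) *\<^sub>R (PV v k (x n) *v (G (x n) w - grad (x n)))) \<bullet> (x n - xs) \<partial>M\<^sub>\<omega>) = 0"
    by (simp add: T_def P_def e_def)
  show ?thesis using part1 part2 by blast
qed

end
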